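(* Let $v$ satisfy the standing assumptions and the doubling condition, with constant $D$. Let $\{n_k\}_{k\ge1}$ be a sequence of positive integers with $n_{k+1}\ge\lambda n_k$ for all $k$, where $\lambda>1$, and let $u(z)=\operatorname{Re}\sum_k a_{n_k}z^{n_k}$, $a_{n_k}\in\mathbb{C}$, where the series converges in $\mathbb{D}$. Then $u\in k^\infty_v$ if and only if there exists $\gamma>0$ such that $\sum_{n_k\le N}|a_{n_k}|\le\gamma\, g(N)$ for every $N\in\mathbb{N}$.
   Context: Standing assumptions: $v:[0,1)\to[1,\infty)$ is positive, increasing, continuous, $v(0)=1$, $\lim_{r\to1}v(r)=+\infty$; $g(x)=v(1-x^{-1})$ for $x\ge1$. Doubling condition: there is $D\ge1$ with $v(1-d)\le D\,v(1-2d)$ for all $d\in(0,1/2]$, equivalently $g(2x)\le D g(x)$ for $x\ge1$. $k^\infty_v$ is the set of real harmonic functions $u$ on the unit disk $\mathbb{D}$ for which there is $K>0$ with $u(z)\le K v(|z|)$ for all $z\in\mathbb{D}$. *)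

theory Defs
  imports "HOL-Analysis.Analysis"
begin

definition weight :: "(real \<Rightarrow> real) \<Rightarrow> bool" where
  "weight v \<longleftrightarrow> (\<forall>r\<in>{0..<1}. v r \<ge> 1) \<and> mono_on {0..<1} v \<and>
     continuous_on {0..<1} v \<and> v 0 = 1 \<and> filterlim v at_top (at_left 1)"

definition gfun :: "(real \<Rightarrow> real) \<Rightarrow> real \<Rightarrow> real" where
  "gfun v x = v (1 - 1 / x)"

definition doubling :: "(real \<Rightarrow> real) \<Rightarrow> real \<Rightarrow> bool" where
  "doubling v D \<longleftrightarrow> D \<ge> 1 \<and> (\<forall>d\<in>{0<..1/2}. v (1 - d) \<le> D * v (1 - 2 * d))"

definition dx :: "(complex \<Rightarrow> real) \<Rightarrow> complex \<Rightarrow> real" where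
  "dx u z = deriv (\<lambda>t. u (z + complex_of_real t)) 0"

definition dy :: "(complex \<Rightarrow> real) \<Rightarrow> complex \<Rightarrow> real" where
  "dy u z = deriv (\<lambda>t. u (z + \<i> * complex_of_real t)) 0"

definition harmonic_on :: "complex set \<Rightarrow> (complex \<Rightarrow> real) \<Rightarrow> bool" where
  "harmonic_on S u \<longleftrightarrow> open S \<and>
     (\<forall>z\<in>S. u differentiable (at z) \<and> dx u differentiable (at z) \<and> dy u differentiable (at z)) \<and>
     continuous_on S (dx (dx u)) \<and> continuous_on S (dx (dy u)) \<and>
     continuous_on S (dy (dx u)) \<and> continuous_on S (dy (dy u)) \<and>
     (\<forall>z\<in>S. dx (dx u) z + dy (dy u) z = 0)"

definition kv_inf :: "(real \<Rightarrow> real) \<Rightarrow> (complex \<Rightarrow> real) set" where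
  "kv_inf v = {u. harmonic_on (ball 0 1) u \<and> (\<exists>K>0. \<forall>z\<in>ball 0 1. u z \<le> K * v (norm z))}"

end

theory Submission
  imports Defs
begin


definition RP :: "(nat \<Rightarrow> nat) \<Rightarrow> (nat \<Rightarrow> real) \<Rightarrow> nat \<Rightarrow> real \<Rightarrow> real" where
  "RP m \<phi> J \<theta> = (\<Prod>j<J. 1 + cos (real (m j) * \<theta> + \<phi> j))"

definition QI :: "(nat \<Rightarrow> nat) \<Rightarrow> (nat \<Rightarrow> real) \<Rightarrow> nat \<Rightarrow> int \<Rightarrow> real \<Rightarrow> real" where
  "QI m \<phi> J k \<psi> = integral {0..2*pi} (\<lambda>\<theta>. cos (of_int k * \<theta> + \<psi>) * RP m \<phi> J \<theta>)"

lemma RP_cont: "continuous_on A (RP m \<phi> J)"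
  unfolding RP_def by (intro continuous_intros)

lemma RP_nonneg: "RP m \<phi> J \<theta> \<ge> 0"
  unfolding RP_def by (intro prod_nonneg) (smt (verit) cos_ge_minus_one)

lemma RP_le: "RP m \<phi> J \<theta> \<le> 2 ^ J"
proof -
  have "RP m \<phi> J \<theta> \<le> (\<Prod>j<J. (2::real))"
    unfolding RP_def by (intro prod_mono) (smt (verit) cos_ge_minus_one cos_le_one)
  then show ?thesis by simp
qed

lemma int_cos_lin:
  assumes "k \<noteq> 0"
  shows "integral {0..2*pi} (\<lambda>\<theta>. cos (of_int k * \<theta> + \<psi>)) = 0"
proof -
  have "((\<lambda>\<theta>. cos (of_int k * \<theta> + \<psi>)) has_integral
        (sin (of_int k * (2*pi) + \<psi>) / of_int k - sin (of_int k * 0 + \<psi>) / of_int k)) {0..2*pi}"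
  proof (rule fundamental_theorem_of_calculus)
    show "0 \<le> 2*pi" by simp
    fix x assume "x \<in> {0..2*pi}"
    show "((\<lambda>\<theta>. sin (of_int k * \<theta> + \<psi>) / of_int k) has_vector_derivative cos (of_int k * x + \<psi>))
          (at x within {0..2*pi})"
      using assms
      by (auto intro!: derivative_eq_intros simp: has_real_derivative_iff_has_vector_derivative[symmetric])
  qed
  moreover have "sin (of_int k * (2*pi) + \<psi>) = sin \<psi>"
  proof -
    have "sin (of_int k * (2*pi) + \<psi>) = sin ((2*pi) * of_int k) * cos \<psi> + cos ((2*pi) * of_int k) * sin \<psi>"
      by (simp add: sin_add mult.commute)
    then show ?thesis by simp
  qed
  ultimately show ?thesis by (simp add: integral_unique)
qed

lemma int_cos_const: "integral {0..2*pi} (\<lambda>\<theta>. cos (of_int 0 * \<theta> + \<psi>)) = 2 * pi * cos \<psi>"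
  by simp

lemma QI_0: "QI m \<phi> 0 k \<psi> = (if k = 0 then 2 * pi * cos \<psi> else 0)"
  unfolding QI_def RP_def using int_cos_lin[of k \<psi>] by simp

lemma QI_Suc: "QI m \<phi> (Suc J) k \<psi> = QI m \<phi> J k \<psi> + QI m \<phi> J (k - int (m J)) (\<psi> - \<phi> J) / 2
      + QI m \<phi> J (k + int (m J)) (\<psi> + \<phi> J) / 2"
proof -
  let ?R = "RP m \<phi> J"
  have eq: "cos (of_int k * \<theta> + \<psi>) * RP m \<phi> (Suc J) \<theta> =
     cos (of_int k * \<theta> + \<psi>) * ?R \<theta> + cos (of_int (k - int (m J)) * \<theta> + (\<psi> - \<phi> J)) * ?R \<theta> / 2
     + cos (of_int (k + int (m J)) * \<theta> + (\<psi> + \<phi> J)) * ?R \<theta> / 2" for \<theta>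
  proof -
    have "cos (of_int k * \<theta> + \<psi>) * cos (real (m J) * \<theta> + \<phi> J) =
       (cos (of_int (k - int (m J)) * \<theta> + (\<psi> - \<phi> J)) + cos (of_int (k + int (m J)) * \<theta> + (\<psi> + \<phi> J))) / 2"
      by (simp add: cos_times_cos algebra_simps)
    moreover have "RP m \<phi> (Suc J) \<theta> = ?R \<theta> * (1 + cos (real (m J) * \<theta> + \<phi> J))"
      unfolding RP_def by simp
    ultimately show ?thesis
      by (simp add: algebra_simps add_divide_distrib)
  qed
  have c: "continuous_on {0..2*pi} (\<lambda>\<theta>. cos (of_int j * \<theta> + ch) * ?R \<theta>)" for j ch
    by (intro continuous_intros RP_cont)
  have i: "(\<lambda>\<theta>. cos (of_int j * \<theta> + ch) * ?R \<theta>) integrable_on {0..2*pi}" for j ch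
    by (rule integrable_continuous_interval[OF c])
  let ?F = "\<lambda>j ch \<theta>. cos (of_int j * \<theta> + ch) * ?R \<theta>"
  have h: "(?F j ch has_integral integral {0..2*pi} (?F j ch)) {0..2*pi}" for j ch
    using i integrable_integral by blast
  have "((\<lambda>\<theta>. ?F k \<psi> \<theta> + ?F (k - int (m J)) (\<psi> - \<phi> J) \<theta> / 2 + ?F (k + int (m J)) (\<psi> + \<phi> J) \<theta> / 2)
     has_integral (integral {0..2*pi} (?F k \<psi>) + integral {0..2*pi} (?F (k - int (m J)) (\<psi> - \<phi> J)) / 2
        + integral {0..2*pi} (?F (k + int (m J)) (\<psi> + \<phi> J)) / 2)) {0..2*pi}"
    by (intro has_integral_add has_integral_divide h)
  then show ?thesis
    unfolding QI_def eq by (rule integral_unique)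
qed

lemma QI_A:
  assumes "\<bar>k\<bar> > int (\<Sum>j<J. m j)"
  shows "QI m \<phi> J k \<psi> = 0"
  using assms
proof (induction J arbitrary: k \<psi>)
  case 0
  then show ?case by (simp add: QI_0)
next
  case (Suc J)
  have a: "\<bar>k\<bar> > int (\<Sum>j<J. m j)" using Suc.prems by simp
  have b: "\<bar>k - int (m J)\<bar> > int (\<Sum>j<J. m j)" "\<bar>k + int (m J)\<bar> > int (\<Sum>j<J. m j)"
    using Suc.prems by auto
  show ?case unfolding QI_Suc using Suc.IH[OF a] Suc.IH[OF b(1)] Suc.IH[OF b(2)] by simp
qed

lemma QI_B:
  assumes "\<And>J. 2 * (\<Sum>j<J. m j) < m J"
  shows "QI m \<phi> J 0 \<psi> = 2 * pi * cos \<psi>"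
proof (induction J arbitrary: \<psi>)
  case 0
  then show ?case by (simp add: QI_0)
next
  case (Suc J)
  have "QI m \<phi> J (0 - int (m J)) (\<psi> - \<phi> J) = 0" "QI m \<phi> J (0 + int (m J)) (\<psi> + \<phi> J) = 0"
    using assms[of J] by (auto intro!: QI_A simp del: of_nat_sum)
  then show ?case unfolding QI_Suc using Suc.IH by simp
qed

lemma QI_C1:
  assumes "\<And>J. 2 * (\<Sum>j<J. m j) < m J" and "i < J"
  shows "QI m \<phi> J (int (m i)) \<psi> = pi * cos (\<psi> - \<phi> i)"
  using assms(2)
proof (induction J arbitrary: \<psi>)
  case 0
  then show ?case by simp
next
  case (Suc J)
  show ?case
  proof (cases "i = J")
    case True
    have "QI m \<phi> J (int (m i)) \<psi> = 0" "QI m \<phi> J (int (m i) + int (m J)) (\<psi> + \<phi> J) = 0"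
      using assms(1)[of J] True by (auto intro!: QI_A simp del: of_nat_sum)
    moreover have "QI m \<phi> J (int (m i) - int (m J)) (\<psi> - \<phi> J) = 2 * pi * cos (\<psi> - \<phi> i)"
      using QI_B[OF assms(1)] True by simp
    ultimately show ?thesis unfolding QI_Suc by simp
  next
    case False
    then have iJ: "i < J" using Suc.prems by simp
    have "m i \<le> (\<Sum>j<J. m j)"
      using iJ by (intro member_le_sum) auto
    then have "QI m \<phi> J (int (m i) - int (m J)) (\<psi> - \<phi> J) = 0" "QI m \<phi> J (int (m i) + int (m J)) (\<psi> + \<phi> J) = 0"
      using assms(1)[of J] by (auto intro!: QI_A simp del: of_nat_sum)
    then show ?thesis unfolding QI_Suc using Suc.IH[OF iJ] by simp
  qed
qed

lemma QI_C:
  assumes "\<And>J. 2 * (\<Sum>j<J. m j) < m J" and "k \<noteq> 0"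
    and "\<And>j. j < J \<Longrightarrow> \<bar>\<bar>k\<bar> - int (m j)\<bar> > int (\<Sum>i<j. m i)"
  shows "QI m \<phi> J k \<psi> = 0"
  using assms(3)
proof (induction J arbitrary: \<psi>)
  case 0
  then show ?case using assms(2) by (simp add: QI_0)
next
  case (Suc J)
  have "\<bar>\<bar>k\<bar> - int (m J)\<bar> > int (\<Sum>i<J. m i)" using Suc.prems by simp
  then have "QI m \<phi> J (k - int (m J)) (\<psi> - \<phi> J) = 0" "QI m \<phi> J (k + int (m J)) (\<psi> + \<phi> J) = 0"
    by (auto intro!: QI_A)
  then show ?case unfolding QI_Suc using Suc by simp
qed



lemma riesz_bound:
  fixes b \<psi> :: "nat \<Rightarrow> real" and nn g :: "nat \<Rightarrow> nat" and w :: "real \<Rightarrow> real"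
  assumes mcond: "\<And>J. 2 * (\<Sum>j<J. nn (g j)) < nn (g J)"
    and ginj: "inj g"
    and far: "\<And>l. l \<notin> g ` {..<J} \<Longrightarrow> nn l \<noteq> 0 \<and>
                 (\<forall>j<J. \<bar>int (nn l) - int (nn (g j))\<bar> > int (\<Sum>i<j. nn (g i)))"
    and b0: "\<And>l. b l \<ge> 0" and bs: "summable b"
    and wdef: "\<And>\<theta>. w \<theta> = (\<Sum>l. b l * cos (real (nn l) * \<theta> + \<psi> l))"
    and wc: "continuous_on {0..2*pi} w"
    and wB: "\<And>\<theta>. w \<theta> \<le> B"
  shows "(\<Sum>j<J. b (g j)) \<le> 2 * B"
proof -
  define m where "m = (\<lambda>j. nn (g j))"
  define \<phi> where "\<phi> = (\<lambda>j. \<psi> (g j))"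
  define P where "P = RP m \<phi> J"
  define S where "S = {0..2*pi::real}"
  have mc: "\<And>J. 2 * (\<Sum>j<J. m j) < m J" using mcond unfolding m_def .
  have Pc: "continuous_on S P" unfolding P_def by (rule RP_cont)
  have iP: "P integrable_on S" unfolding S_def using Pc[unfolded S_def] by (rule integrable_continuous_interval)
  have iwP: "(\<lambda>\<theta>. w \<theta> * P \<theta>) integrable_on S"
    unfolding S_def by (intro integrable_continuous_interval continuous_intros wc Pc[unfolded S_def])
  have IP: "integral S P = 2 * pi"
    using QI_B[OF mc, of \<phi> J 0] unfolding QI_def P_def S_def by simp
  have I1: "integral S (\<lambda>\<theta>. w \<theta> * P \<theta>) \<le> 2 * pi * B"
  proof -
    have "integral S (\<lambda>\<theta>. w \<theta> * P \<theta>) \<le> integral S (\<lambda>\<theta>. B * P \<theta>)"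
    proof (rule integral_le)
      show "(\<lambda>\<theta>. w \<theta> * P \<theta>) integrable_on S" by (rule iwP)
      show "(\<lambda>\<theta>. B * P \<theta>) integrable_on S" using iP by (rule integrable_on_mult_right)
      fix \<theta> show "w \<theta> * P \<theta> \<le> B * P \<theta>"
        using wB[of \<theta>] RP_nonneg[of m \<phi> J \<theta>] unfolding P_def by (rule mult_right_mono)
    qed
    also have "\<dots> = B * integral S P" unfolding integral_mult[OF iP, of B, symmetric] by simp
    finally show ?thesis using IP by (simp add: mult_ac)
  qed
  define f where "f = (\<lambda>\<theta> l. b l * cos (real (nn l) * \<theta> + \<psi> l))"
  have fs: "summable (f \<theta>)" for \<theta>
    unfolding f_def
    by (rule summable_comparison_test[OF _ bs]) (auto intro!: exI[of _ 0] simp: abs_mult b0 mult_left_le)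
  define L0 where "L0 = (\<Sum>j<J. g j) + 1"
  have gL0: "j < J \<Longrightarrow> g j < L0" for j
    unfolding L0_def using member_le_sum[of j "{..<J}" g] by auto
  have IL: "integral S (\<lambda>\<theta>. (\<Sum>l<L. f \<theta> l) * P \<theta>) = pi * (\<Sum>j<J. b (g j))" if "L \<ge> L0" for L
  proof -
    have ci: "(\<lambda>\<theta>. f \<theta> l * P \<theta>) integrable_on S" for l
      unfolding S_def f_def by (intro integrable_continuous_interval continuous_intros Pc[unfolded S_def])
    have "integral S (\<lambda>\<theta>. (\<Sum>l<L. f \<theta> l) * P \<theta>) = (\<Sum>l<L. integral S (\<lambda>\<theta>. f \<theta> l * P \<theta>))"
      unfolding sum_distrib_right using ci by (intro integral_sum) auto
    also have "\<dots> = (\<Sum>l<L. b l * QI m \<phi> J (int (nn l)) (\<psi> l))"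
    proof (intro sum.cong refl)
      fix l
      have "integral S (\<lambda>\<theta>. f \<theta> l * P \<theta>) = integral S (\<lambda>\<theta>. b l * (cos (of_int (int (nn l)) * \<theta> + \<psi> l) * P \<theta>))"
        unfolding f_def by (simp add: algebra_simps)
      also have "\<dots> = b l * QI m \<phi> J (int (nn l)) (\<psi> l)"
        unfolding QI_def P_def S_def by simp
      finally show "integral S (\<lambda>\<theta>. f \<theta> l * P \<theta>) = b l * QI m \<phi> J (int (nn l)) (\<psi> l)" .
    qed
    also have "\<dots> = (\<Sum>l\<in>g ` {..<J}. b l * QI m \<phi> J (int (nn l)) (\<psi> l))"
    proof (rule sum.mono_neutral_right)
      show "finite {..<L}" by simp
      show "g ` {..<J} \<subseteq> {..<L}" using gL0 that by (auto intro: less_le_trans)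
      show "\<forall>l\<in>{..<L} - g ` {..<J}. b l * QI m \<phi> J (int (nn l)) (\<psi> l) = 0"
      proof
        fix l assume "l \<in> {..<L} - g ` {..<J}"
        then have "l \<notin> g ` {..<J}" by auto
        from far[OF this] have "QI m \<phi> J (int (nn l)) (\<psi> l) = 0"
          by (intro QI_C[OF mc]) (auto simp: m_def)
        then show "b l * QI m \<phi> J (int (nn l)) (\<psi> l) = 0" by simp
      qed
    qed
    also have "\<dots> = (\<Sum>j<J. b (g j) * QI m \<phi> J (int (m j)) (\<phi> j))"
      using ginj by (subst sum.reindex) (auto simp: inj_on_def inj_def m_def \<phi>_def)
    also have "\<dots> = (\<Sum>j<J. b (g j) * pi)"
      by (intro sum.cong refl) (simp add: QI_C1[OF mc])
    finally show ?thesis by (simp add: sum_distrib_left mult.commute)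
  qed
  have "pi * (\<Sum>j<J. b (g j)) \<le> 2 * pi * B + 2 * pi * e" if e: "e > 0" for e
  proof -
    obtain N where N: "\<And>L. L \<ge> N \<Longrightarrow> norm (\<Sum>i. b (i + L)) < e"
      using suminf_exist_split[OF e bs] by blast
    define L where "L = max N L0"
    have "norm (\<Sum>i. b (i + L)) < e" by (rule N) (simp add: L_def)
    then have bL: "(\<Sum>i. b (i + L)) < e" by simp
    have bLs: "summable (\<lambda>i. b (i + L))" using bs by (simp add: summable_iff_shift)
    have diff: "\<bar>w \<theta> - (\<Sum>l<L. f \<theta> l)\<bar> \<le> e" for \<theta>
    proof -
      have "w \<theta> = (\<Sum>i. f \<theta> (i + L)) + (\<Sum>l<L. f \<theta> l)"
        using wdef suminf_split_initial_segment[OF fs[of \<theta>], of L] unfolding f_def by simp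
      then have "\<bar>w \<theta> - (\<Sum>l<L. f \<theta> l)\<bar> = \<bar>\<Sum>i. f \<theta> (i + L)\<bar>" by simp
      also have "\<dots> \<le> (\<Sum>i. b (i + L))"
      proof -
        have "\<bar>f \<theta> (i + L)\<bar> \<le> b (i + L)" for i
          unfolding f_def by (simp add: abs_mult b0 mult_left_le)
        then have s: "summable (\<lambda>i. \<bar>f \<theta> (i + L)\<bar>)"
          by (intro summable_comparison_test[OF _ bLs]) auto
        have "\<bar>\<Sum>i. f \<theta> (i + L)\<bar> \<le> (\<Sum>i. \<bar>f \<theta> (i + L)\<bar>)" by (rule summable_rabs[OF s])
        also have "\<dots> \<le> (\<Sum>i. b (i + L))"
          by (intro suminf_le s bLs) (simp add: \<open>\<And>i. \<bar>f \<theta> (i + L)\<bar> \<le> b (i + L)\<close>)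
        finally show ?thesis .
      qed
      finally show ?thesis using bL by simp
    qed
    have iwL: "(\<lambda>\<theta>. (\<Sum>l<L. f \<theta> l) * P \<theta>) integrable_on S"
      unfolding S_def f_def by (intro integrable_continuous_interval continuous_intros Pc[unfolded S_def])
    have "integral S (\<lambda>\<theta>. (\<Sum>l<L. f \<theta> l) * P \<theta>) - integral S (\<lambda>\<theta>. w \<theta> * P \<theta>)
          = integral S (\<lambda>\<theta>. (\<Sum>l<L. f \<theta> l) * P \<theta> - w \<theta> * P \<theta>)"
      using iwL iwP by (simp add: integral_diff)
    also have "\<dots> \<le> integral S (\<lambda>\<theta>. e * P \<theta>)"
    proof -
      have "norm (integral S (\<lambda>\<theta>. (\<Sum>l<L. f \<theta> l) * P \<theta> - w \<theta> * P \<theta>)) \<le> integral S (\<lambda>\<theta>. e * P \<theta>)"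
      proof (rule integral_norm_bound_integral)
        show "(\<lambda>\<theta>. (\<Sum>l<L. f \<theta> l) * P \<theta> - w \<theta> * P \<theta>) integrable_on S"
          using iwL iwP by (rule integrable_diff)
        show "(\<lambda>\<theta>. e * P \<theta>) integrable_on S" using iP by (rule integrable_on_mult_right)
        fix \<theta>
        have "norm ((\<Sum>l<L. f \<theta> l) * P \<theta> - w \<theta> * P \<theta>) = \<bar>w \<theta> - (\<Sum>l<L. f \<theta> l)\<bar> * P \<theta>"
        proof -
          have "norm ((\<Sum>l<L. f \<theta> l) * P \<theta> - w \<theta> * P \<theta>) = \<bar>(\<Sum>l<L. f \<theta> l) - w \<theta>\<bar> * \<bar>P \<theta>\<bar>"
            by (simp add: abs_mult left_diff_distrib[symmetric])
          also have "\<dots> = \<bar>w \<theta> - (\<Sum>l<L. f \<theta> l)\<bar> * P \<theta>"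
            using RP_nonneg[of m \<phi> J \<theta>] unfolding P_def by (metis abs_minus_commute abs_of_nonneg)
          finally show ?thesis .
        qed
        also have "\<dots> \<le> e * P \<theta>"
          using diff[of \<theta>] RP_nonneg[of m \<phi> J \<theta>] unfolding P_def by (intro mult_right_mono) auto
        finally show "norm ((\<Sum>l<L. f \<theta> l) * P \<theta> - w \<theta> * P \<theta>) \<le> e * P \<theta>" .
      qed
      then show ?thesis by simp
    qed
    also have "\<dots> = 2 * pi * e" unfolding integral_mult[OF iP, of e, symmetric] IP by simp
    finally have "integral S (\<lambda>\<theta>. (\<Sum>l<L. f \<theta> l) * P \<theta>) \<le> 2 * pi * B + 2 * pi * e" using I1 by linarith
    moreover have LL0: "L \<ge> L0" unfolding L_def by simp
    ultimately show ?thesis using IL[OF LL0] by linarith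
  qed
  then have key: "(\<Sum>j<J. b (g j)) \<le> 2 * B + 2 * e" if "e > 0" for e
  proof -
    have "pi * (\<Sum>j<J. b (g j)) \<le> pi * (2 * B + 2 * e)"
      using \<open>\<And>e. 0 < e \<Longrightarrow> pi * (\<Sum>j<J. b (g j)) \<le> 2 * pi * B + 2 * pi * e\<close>[OF that]
      by (simp only: distrib_left mult.assoc mult.left_commute[of pi])
    then show ?thesis using pi_gt_zero by (simp only: mult_le_cancel_left_pos)
  qed
  show ?thesis
  proof (rule field_le_epsilon)
    fix e :: real assume "e > 0"
    then have "(\<Sum>j<J. b (g j)) \<le> 2 * B + 2 * (e/2)" using key[of "e/2"] by simp
    then show "(\<Sum>j<J. b (g j)) \<le> 2 * B + e" by simp
  qed
qed



locale lac =
  fixes lam :: real and n :: "nat \<Rightarrow> nat"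
  assumes lam1: "lam > 1" and npos: "\<And>k. n k > 0" and ngrow: "\<And>k. real (n (Suc k)) \<ge> lam * real (n k)"
begin

lemma nsuc: "n k < n (Suc k)"
proof -
  have "real (n k) < lam * real (n k)" using lam1 npos[of k] by simp
  also have "\<dots> \<le> real (n (Suc k))" by (rule ngrow)
  finally show ?thesis by simp
qed

lemma smono: "strict_mono n"
  using nsuc by (rule strict_monoI_Suc)

lemma lac_pow: "lam ^ d * real (n k) \<le> real (n (k + d))"
proof (induction d)
  case 0 then show ?case by simp
next
  case (Suc d)
  have "lam ^ Suc d * real (n k) = lam * (lam ^ d * real (n k))" by simp
  also have "\<dots> \<le> lam * real (n (k + d))" using Suc.IH lam1 by (intro mult_left_mono) auto
  also have "\<dots> \<le> real (n (k + Suc d))" using ngrow[of "k + d"] by simp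
  finally show ?case .
qed

lemma lac_lt: assumes "l < p" shows "lam * real (n l) \<le> real (n p)"
proof -
  obtain d where d: "p = l + Suc d" using less_imp_Suc_add[OF assms] by auto
  have "lam * real (n l) \<le> lam ^ Suc d * real (n l)"
  proof -
    have "lam ^ 1 \<le> lam ^ Suc d" by (rule power_increasing) (use lam1 in auto)
    then have "lam \<le> lam ^ Suc d" by simp
    then show ?thesis using npos[of l] by (intro mult_right_mono) auto
  qed
  also have "\<dots> \<le> real (n p)" unfolding d by (rule lac_pow)
  finally show ?thesis .
qed

lemma lac_sep: assumes "l \<noteq> p" shows "(1 - 1/lam) * real (n p) \<le> \<bar>real (n l) - real (n p)\<bar>"
proof (cases "l < p")
  case True
  have "lam * real (n l) \<le> real (n p)" by (rule lac_lt[OF True])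
  then have h: "real (n l) \<le> real (n p) / lam" using lam1 by (simp add: field_simps)
  have "real (n p) * 1 \<le> real (n p) * lam" using lam1 by (intro mult_left_mono) auto
  then have "real (n p) / lam \<le> real (n p)" using lam1 by (simp add: field_simps)
  then have "\<bar>real (n l) - real (n p)\<bar> = real (n p) - real (n l)" using h by simp
  moreover have "(1 - 1/lam) * real (n p) = real (n p) - real (n p) / lam" by (simp add: algebra_simps)
  ultimately show ?thesis using h by simp
next
  case False
  then have "p < l" using assms by simp
  have "lam * real (n p) \<le> real (n l)" by (rule lac_lt[OF \<open>p < l\<close>])
  moreover have "(1 - 1/lam) * real (n p) \<le> (lam - 1) * real (n p)"
  proof (rule mult_right_mono)
    have "1 - 1/lam \<le> 1" using lam1 by simp
    have "(lam - 1) - (1 - 1/lam) = (lam - 1)^2 / lam" using lam1 by (simp add: field_simps power2_eq_square)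
    also have "\<dots> \<ge> 0" using lam1 by simp
    finally show "1 - 1/lam \<le> lam - 1" by simp
  qed simp
  ultimately show ?thesis by (simp add: algebra_simps)
qed

end



lemma geo_inv:
  fixes m :: "nat \<Rightarrow> nat" and \<mu> :: real
  assumes "\<And>j. real (m (Suc j)) \<ge> \<mu> * real (m j)" "\<mu> > 1"
  shows "(\<mu> - 1) * (\<Sum>i<J. real (m i)) \<le> real (m J)"
proof (induction J)
  case 0 then show ?case by simp
next
  case (Suc J)
  have "(\<mu> - 1) * (\<Sum>i<Suc J. real (m i)) = (\<mu> - 1) * (\<Sum>i<J. real (m i)) + (\<mu> - 1) * real (m J)"
    by (simp add: algebra_simps)
  also have "\<dots> \<le> real (m J) + (\<mu> - 1) * real (m J)" using Suc by simp
  also have "\<dots> = \<mu> * real (m J)" by (simp add: algebra_simps)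
  also have "\<dots> \<le> real (m (Suc J))" by (rule assms(1))
  finally show ?case .
qed

lemma sum_split_add: "(\<Sum>k<a + q. f k) = (\<Sum>k<a. f k) + (\<Sum>c<q. f (a + c))" for f :: "nat \<Rightarrow> real"
  by (induction q) auto

lemma sum_group: "(\<Sum>k<q * J. f k) = (\<Sum>c<q. \<Sum>j<J. f (c + q * j))" for f :: "nat \<Rightarrow> real"
proof (induction J)
  case 0 then show ?case by simp
next
  case (Suc J)
  have "(\<Sum>k<q * Suc J. f k) = (\<Sum>k<q * J + q. f k)" by (simp add: algebra_simps)
  also have "\<dots> = (\<Sum>k<q * J. f k) + (\<Sum>c<q. f (q * J + c))" by (rule sum_split_add)
  also have "\<dots> = (\<Sum>c<q. \<Sum>j<Suc J. f (c + q * j))"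
    using Suc by (simp add: sum.distrib add.commute)
  finally show ?case .
qed

definition cc :: "(nat \<Rightarrow> nat) \<Rightarrow> (nat \<Rightarrow> complex) \<Rightarrow> nat \<Rightarrow> complex" where
  "cc n a m = (if m \<in> range n then a (inv n m) else 0)"

context lac begin

lemma cc_n: "cc n a (n k) = a k"
  unfolding cc_def using smono by (simp add: strict_mono_imp_inj_on inv_f_f)

lemma summable_cc_iff:
  fixes a :: "nat \<Rightarrow> complex" and z :: complex
  shows "summable (\<lambda>k. a k * z ^ n k) \<longleftrightarrow> summable (\<lambda>m. cc n a m * z ^ m)"
proof -
  have "summable (\<lambda>k. cc n a (n k) * z ^ n k) \<longleftrightarrow> summable (\<lambda>m. cc n a m * z ^ m)"
    by (rule summable_mono_reindex[OF smono]) (simp add: cc_def)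
  then show ?thesis by (simp only: cc_n)
qed

lemma abs_summ:
  fixes a :: "nat \<Rightarrow> complex" and z :: complex
  assumes summ: "\<And>z. norm z < 1 \<Longrightarrow> summable (\<lambda>k. a k * z ^ n k)" and z: "norm z < 1"
  shows "summable (\<lambda>k. norm (a k * z ^ n k))"
proof -
  define \<rho> where "\<rho> = (norm z + 1) / 2"
  have \<rho>: "norm z < \<rho>" "\<rho> < 1" using z unfolding \<rho>_def by auto
  have "\<rho> > 0" using \<rho> norm_ge_zero[of z] by linarith
  then have "summable (\<lambda>k. a k * complex_of_real \<rho> ^ n k)" using \<rho> by (intro summ) simp
  then have "summable (\<lambda>m. cc n a m * complex_of_real \<rho> ^ m)" by (simp add: summable_cc_iff)
  then have "summable (\<lambda>m. norm (cc n a m * z ^ m))"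
    by (rule powser_insidea) (use \<rho> in simp)
  moreover have "summable (\<lambda>k. norm (cc n a (n k) * z ^ n k)) \<longleftrightarrow> summable (\<lambda>m. norm (cc n a m * z ^ m))"
    by (rule summable_mono_reindex[OF smono]) (simp add: cc_def)
  ultimately show ?thesis by (simp only: cc_n)
qed

lemma exists_q: "\<exists>q. lam ^ q \<ge> 4 \<and> lam ^ q - 1 > lam / (lam - 1)"
proof -
  obtain q where "max 4 (1 + lam / (lam - 1)) < lam ^ q" using real_arch_pow[OF lam1] by blast
  then show ?thesis by (intro exI[of _ q]) auto
qed

lemma sub_grow: "real (n (c + q * Suc j)) \<ge> lam ^ q * real (n (c + q * j))"
  using lac_pow[of q "c + q * j"] by (simp add: algebra_simps)

end



lemma rcis_alt: "rcis r \<theta> = complex_of_real (r * cos \<theta>) + \<i> * complex_of_real (r * sin \<theta>)"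
  by (simp add: complex_eq_iff)

lemma Re_term: "Re (a * rcis r \<theta> ^ k) = norm a * r ^ k * cos (real k * \<theta> + Arg a)"
proof -
  have "a * rcis r \<theta> ^ k = rcis (norm a) (Arg a) * rcis (r ^ k) (real k * \<theta>)"
    by (simp add: DeMoivre2 rcis_cmod_Arg)
  also have "\<dots> = rcis (norm a * r ^ k) (Arg a + real k * \<theta>)" by (simp add: rcis_mult)
  finally show ?thesis by (simp add: add.commute)
qed

context lac begin

lemma fwd_partial:
  fixes a :: "nat \<Rightarrow> complex" and u :: "complex \<Rightarrow> real"
  assumes summ: "\<And>z. norm z < 1 \<Longrightarrow> summable (\<lambda>k. a k * z ^ n k)"
    and udef: "\<And>z. u z = Re (\<Sum>k. a k * z ^ n k)"
    and uc: "continuous_on (ball 0 1) u"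
    and ub: "\<And>z. norm z = r \<Longrightarrow> u z \<le> B"
    and r: "0 \<le> r" "r < 1"
    and q: "lam ^ q \<ge> 4" "lam ^ q - 1 > lam / (lam - 1)"
  shows "(\<Sum>k<q*J. norm (a k) * r ^ n k) \<le> 2 * q * B"
proof -
  define b where "b = (\<lambda>l. norm (a l) * r ^ n l)"
  define \<psi> where "\<psi> = (\<lambda>l. Arg (a l))"
  define w where "w = (\<lambda>\<theta>. u (rcis r \<theta>))"
  define \<mu> where "\<mu> = lam ^ q"
  have q0: "q > 0" using q lam1 by (cases q) auto
  have \<mu>1: "\<mu> > 1" using q unfolding \<mu>_def by simp
  have bs: "summable b"
  proof -
    have "summable (\<lambda>k. norm (a k * complex_of_real r ^ n k))"
      using r by (intro abs_summ summ) auto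
    then show ?thesis unfolding b_def using r by (simp add: norm_mult norm_power)
  qed
  have b0: "\<And>l. b l \<ge> 0" unfolding b_def using r by simp
  have wdef: "w \<theta> = (\<Sum>l. b l * cos (real (n l) * \<theta> + \<psi> l))" for \<theta>
  proof -
    have s: "summable (\<lambda>k. a k * rcis r \<theta> ^ n k)" using r by (intro summ) simp
    have "w \<theta> = (\<Sum>k. Re (a k * rcis r \<theta> ^ n k))"
      unfolding w_def udef using bounded_linear.suminf[OF bounded_linear_Re s] by simp
    then show ?thesis unfolding b_def \<psi>_def Re_term by simp
  qed
  have wc: "continuous_on {0..2*pi} w"
  proof -
    have "continuous_on {0..2*pi} (rcis r)" unfolding rcis_alt by (intro continuous_intros)
    moreover have "rcis r ` {0..2*pi} \<subseteq> ball 0 1" using r by auto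
    ultimately show ?thesis unfolding w_def using continuous_on_compose2[OF uc] by blast
  qed
  have wB: "\<And>\<theta>. w \<theta> \<le> B" unfolding w_def using r by (intro ub) simp
  have inner: "(\<Sum>j<J. b (c + q * j)) \<le> 2 * B" for c
  proof (rule riesz_bound[where nn = n and \<psi> = \<psi> and w = w])
    define m where "m = (\<lambda>j. n (c + q * j))"
    have mg: "\<And>j. real (m (Suc j)) \<ge> \<mu> * real (m j)" unfolding m_def \<mu>_def by (rule sub_grow)
    have T: "(\<mu> - 1) * (\<Sum>i<j. real (m i)) \<le> real (m j)" for j by (rule geo_inv[of \<mu> m, OF mg \<mu>1])
    have mpos: "real (m j) > 0" for j unfolding m_def using npos by simp
    show "2 * (\<Sum>j<J. n (c + q * j)) < n (c + q * J)" for J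
    proof -
      have "3 * (\<Sum>i<J. real (m i)) \<le> (\<mu> - 1) * (\<Sum>i<J. real (m i))"
        using q unfolding \<mu>_def by (intro mult_right_mono sum_nonneg) auto
      then have "2 * (\<Sum>i<J. real (m i)) < real (m J)" using T[of J] mpos[of J]
        by (smt (verit) sum_nonneg of_nat_0_le_iff)
      then have "real (2 * (\<Sum>i<J. m i)) < real (m J)" by simp
      then show ?thesis unfolding m_def by (simp only: of_nat_less_iff)
    qed
    show "inj (\<lambda>j. c + q * j)" using q0 by (auto simp: inj_def)
    show "\<And>l. b l \<ge> 0" by (rule b0)
    show "summable b" by (rule bs)
    show "\<And>\<theta>. w \<theta> = (\<Sum>l. b l * cos (real (n l) * \<theta> + \<psi> l))" by (rule wdef)
    show "continuous_on {0..2*pi} w" by (rule wc)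
    show "\<And>\<theta>. w \<theta> \<le> B" by (rule wB)
    fix l assume l: "l \<notin> (\<lambda>j. c + q * j) ` {..<J}"
    show "n l \<noteq> 0 \<and> (\<forall>j<J. \<bar>int (n l) - int (n (c + q * j))\<bar> > int (\<Sum>i<j. n (c + q * i)))"
    proof (intro conjI allI impI)
      show "n l \<noteq> 0" using npos[of l] by simp
      fix j assume "j < J"
      then have lj: "l \<noteq> c + q * j" using l by auto
      have sep: "(1 - 1/lam) * real (m j) \<le> \<bar>real (n l) - real (m j)\<bar>"
        unfolding m_def by (rule lac_sep[OF lj])
      have c1: "1 / (\<mu> - 1) < 1 - 1/lam"
      proof -
        have "lam / (lam - 1) > 0" using lam1 by simp
        moreover have "\<mu> - 1 > lam / (lam - 1)" using q unfolding \<mu>_def by simp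
        ultimately have "0 < (\<mu> - 1) * (lam / (lam - 1))" by (intro mult_pos_pos) auto
        then have "1 / (\<mu> - 1) < 1 / (lam / (lam - 1))"
          using \<open>\<mu> - 1 > lam / (lam - 1)\<close> by (intro divide_strict_left_mono) auto
        also have "\<dots> = 1 - 1/lam" using lam1 by (simp add: field_simps)
        finally show ?thesis .
      qed
      have "(\<Sum>i<j. real (m i)) \<le> real (m j) / (\<mu> - 1)"
        using T[of j] \<mu>1 by (simp add: field_simps)
      also have "\<dots> = (1 / (\<mu> - 1)) * real (m j)" by simp
      also have "\<dots> < (1 - 1/lam) * real (m j)" using c1 mpos[of j] by (rule mult_strict_right_mono)
      also have "\<dots> \<le> \<bar>real (n l) - real (m j)\<bar>" by (rule sep)
      finally have "real_of_int (int (\<Sum>i<j. m i)) < real_of_int \<bar>int (n l) - int (m j)\<bar>" by simp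
      then show "\<bar>int (n l) - int (n (c + q * j))\<bar> > int (\<Sum>i<j. n (c + q * i))"
        unfolding m_def by (simp only: of_int_less_iff)
    qed
  qed
  have "(\<Sum>k<q*J. b k) = (\<Sum>c<q. \<Sum>j<J. b (c + q * j))" by (rule sum_group)
  also have "\<dots> \<le> (\<Sum>c<q. 2 * B)" by (intro sum_mono inner)
  also have "\<dots> = 2 * real q * B" by simp
  finally show ?thesis unfolding b_def .
qed

end



lemma weight_ge1: "weight v \<Longrightarrow> 0 \<le> r \<Longrightarrow> r < 1 \<Longrightarrow> v r \<ge> 1"
  unfolding weight_def by auto

lemma weight_mono: "weight v \<Longrightarrow> 0 \<le> x \<Longrightarrow> x \<le> y \<Longrightarrow> y < 1 \<Longrightarrow> v x \<le> v y"
  unfolding weight_def by (auto intro: mono_onD)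

lemma gfun_mono: assumes "weight v" "1 \<le> x" "x \<le> y" shows "gfun v x \<le> gfun v y"
proof -
  have "1/y \<le> 1/x" using assms by (intro divide_left_mono) auto
  moreover have "1/y > 0" "1/x \<le> 1" using assms by auto
  ultimately show ?thesis unfolding gfun_def by (intro weight_mono[OF assms(1)]) auto
qed

lemma gfun_ge1: assumes "weight v" "1 \<le> x" shows "gfun v x \<ge> 1"
  unfolding gfun_def using assms by (intro weight_ge1) auto

lemma gfun_double: assumes "doubling v D" "x \<ge> 1" shows "gfun v (2 * x) \<le> D * gfun v x"
proof -
  define d where "d = 1 / (2 * x)"
  have "d \<in> {0<..1/2}" unfolding d_def using assms(2) by (auto simp: field_simps)
  then have "v (1 - d) \<le> D * v (1 - 2 * d)" using assms(1) unfolding doubling_def by blast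
  moreover have "1 - d = 1 - 1 / (2 * x)" "1 - 2 * d = 1 - 1 / x" unfolding d_def by auto
  ultimately show ?thesis unfolding gfun_def by simp
qed

lemma exp_bound: fixes N :: nat assumes "N \<ge> 1"
  shows "exp 1 * (real N / (real N + 1)) ^ N \<ge> 1"
proof -
  have "(1 + 1 / real N) ^ N \<le> exp (1 / real N) ^ N"
    by (intro power_mono exp_ge_add_one_self) auto
  also have "\<dots> = exp 1" using assms by (simp add: exp_of_nat_mult[symmetric])
  finally have A: "(1 + 1 / real N) ^ N \<le> exp 1" .
  have "(real N / (real N + 1)) ^ N * (1 + 1 / real N) ^ N = 1"
  proof -
    have "real N > 0" using assms by simp
    then have e: "1 + 1 / real N = (real N + 1) / real N" by (simp add: field_simps)
    have "real N + 1 > 0" by simp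
    then have "real N / (real N + 1) * (1 + 1 / real N) = 1" unfolding e using \<open>real N > 0\<close> by simp
    then show ?thesis by (metis power_mult_distrib power_one)
  qed
  then have "1 \<le> (real N / (real N + 1)) ^ N * exp 1"
    using A by (metis mult_left_mono zero_le_divide_iff zero_le_power of_nat_0_le_iff
        add_nonneg_nonneg zero_le_one)
  then show ?thesis by (simp add: mult.commute)
qed

context lac begin

lemma n_ge: "n k \<ge> Suc k"
proof (induction k)
  case 0 then show ?case using npos[of 0] by simp
next
  case (Suc k) then show ?case using nsuc[of k] by simp
qed

lemma fwd:
  fixes a :: "nat \<Rightarrow> complex" and u :: "complex \<Rightarrow> real"
  assumes wv: "weight v" and dv: "doubling v D"
    and summ: "\<And>z. norm z < 1 \<Longrightarrow> summable (\<lambda>k. a k * z ^ n k)"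
    and udef: "\<And>z. u z = Re (\<Sum>k. a k * z ^ n k)"
    and uk: "u \<in> kv_inf v"
  shows "\<exists>\<gamma>>0. \<forall>N::nat. N \<ge> 1 \<longrightarrow> (\<Sum>k\<in>{k. n k \<le> N}. norm (a k)) \<le> \<gamma> * gfun v (real N)"
proof -
  from uk obtain K where K: "K > 0" "\<And>z. z \<in> ball 0 1 \<Longrightarrow> u z \<le> K * v (norm z)"
    and har: "harmonic_on (ball 0 1) u" unfolding kv_inf_def by blast
  have "\<forall>z\<in>ball 0 1. isCont u z"
    using har unfolding harmonic_on_def by (auto intro: differentiable_imp_continuous_within)
  then have uc: "continuous_on (ball 0 1) u" by (rule continuous_at_imp_continuous_on)
  obtain q where q: "lam ^ q \<ge> 4" "lam ^ q - 1 > lam / (lam - 1)" using exists_q by blast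
  have q0: "q > 0" using q lam1 by (cases q) auto
  have D1: "D \<ge> 1" using dv unfolding doubling_def by simp
  define \<gamma> where "\<gamma> = 2 * exp 1 * real q * K * D"
  have \<gamma>0: "\<gamma> > 0" unfolding \<gamma>_def using q0 K D1 by simp
  show ?thesis
  proof (intro exI[of _ \<gamma>] conjI allI impI \<gamma>0)
    fix N :: nat assume N: "N \<ge> 1"
    define r where "r = real N / (real N + 1)"
    have r: "0 \<le> r" "r < 1" "r \<le> 1" unfolding r_def by auto
    define A where "A = {k. n k \<le> N}"
    have AN: "A \<subseteq> {..<q * N}"
    proof
      fix k assume "k \<in> A"
      then have "Suc k \<le> N" using n_ge[of k] unfolding A_def by simp
      moreover have "N \<le> q * N" using q0 by simp
      ultimately show "k \<in> {..<q * N}" unfolding lessThan_iff by linarith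
    qed
    have finA: "finite A" using AN finite_subset by blast
    have ub: "u z \<le> K * v r" if "norm z = r" for z
      using K(2)[of z] that r by simp
    have P: "(\<Sum>k<q*N. norm (a k) * r ^ n k) \<le> 2 * real q * (K * v r)"
      by (rule fwd_partial[OF summ udef uc ub r(1,2) q])
    have "(\<Sum>k\<in>A. norm (a k)) \<le> (\<Sum>k\<in>A. exp 1 * (norm (a k) * r ^ n k))"
    proof (intro sum_mono)
      fix k assume "k \<in> A"
      then have "n k \<le> N" unfolding A_def by simp
      then have "r ^ N \<le> r ^ n k" using r by (intro power_decreasing) auto
      then have "1 \<le> exp 1 * r ^ n k" using exp_bound[OF N] unfolding r_def[symmetric]
        by (smt (verit) exp_gt_zero mult_left_mono)
      then show "norm (a k) \<le> exp 1 * (norm (a k) * r ^ n k)"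
        using mult_left_mono[of 1 "exp 1 * r ^ n k" "norm (a k)"] by (simp add: algebra_simps)
    qed
    also have "\<dots> = exp 1 * (\<Sum>k\<in>A. norm (a k) * r ^ n k)" by (simp add: sum_distrib_left)
    also have "\<dots> \<le> exp 1 * (\<Sum>k<q*N. norm (a k) * r ^ n k)"
      using AN r by (intro mult_left_mono sum_mono2) auto
    also have "\<dots> \<le> exp 1 * (2 * real q * (K * v r))" using P by simp
    also have "\<dots> \<le> exp 1 * (2 * real q * (K * (D * gfun v (real N))))"
    proof -
      have "v r = gfun v (real N + 1)" unfolding gfun_def r_def using N by (simp add: field_simps)
      also have "\<dots> \<le> gfun v (2 * real N)" using N by (intro gfun_mono[OF wv]) auto
      also have "\<dots> \<le> D * gfun v (real N)" using N by (intro gfun_double[OF dv]) auto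
      finally show ?thesis using K q0 by (intro mult_left_mono) auto
    qed
    also have "\<dots> = \<gamma> * gfun v (real N)" unfolding \<gamma>_def by (simp add: algebra_simps)
    finally show "(\<Sum>k\<in>{k. n k \<le> N}. norm (a k)) \<le> \<gamma> * gfun v (real N)" unfolding A_def .
  qed
qed

end



lemma dx_Re:
  fixes u :: "complex \<Rightarrow> real" and G :: "complex \<Rightarrow> complex"
  assumes S: "open S" "z \<in> S" and eq: "\<And>w. w \<in> S \<Longrightarrow> u w = Re (G w)"
    and d: "(G has_field_derivative G') (at z)"
  shows "dx u z = Re G'" "dy u z = Re (\<i> * G')"
proof -
  have dH: "((\<lambda>w. G (z + w)) has_field_derivative G') (at 0)"
  proof -
    have "((\<lambda>w. z + w) has_field_derivative 1) (at 0)" by (auto intro!: derivative_eq_intros)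
    moreover have "(G has_field_derivative G') (at (z + 0))" using d by simp
    ultimately show ?thesis using DERIV_chain2[of G G' "\<lambda>w. z + w" 0 1] by simp
  qed
  have dH2: "((\<lambda>w. G (z + \<i> * w)) has_field_derivative (G' * \<i>)) (at 0)"
  proof -
    have "((\<lambda>w. z + \<i> * w) has_field_derivative \<i>) (at 0)" by (auto intro!: derivative_eq_intros)
    moreover have "(G has_field_derivative G') (at (z + \<i> * 0))" using d by simp
    ultimately show ?thesis using DERIV_chain2[of G G' "\<lambda>w. z + \<i> * w" 0 \<i>] by simp
  qed
  define T where "T = (\<lambda>t::real. z + complex_of_real t) -` S"
  define T2 where "T2 = (\<lambda>t::real. z + \<i> * complex_of_real t) -` S"
  have oT: "open T" unfolding T_def
    by (rule open_vimage[OF S(1)]) (intro continuous_intros)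
  have oT2: "open T2" unfolding T2_def
    by (rule open_vimage[OF S(1)]) (intro continuous_intros)
  have "((\<lambda>t. Re (G (z + complex_of_real t))) has_field_derivative Re G') (at 0)"
    using has_field_derivative_Re[OF has_vector_derivative_real_field[of "\<lambda>w. G (z + w)" G' 0 UNIV]] dH
    by simp
  then have "((\<lambda>t. u (z + complex_of_real t)) has_field_derivative Re G') (at 0)"
    by (rule has_field_derivative_transform_within_open[OF _ oT]) (use S eq in \<open>auto simp: T_def\<close>)
  then show "dx u z = Re G'" unfolding dx_def by (rule DERIV_imp_deriv)
  have "((\<lambda>t. Re (G (z + \<i> * complex_of_real t))) has_field_derivative Re (G' * \<i>)) (at 0)"
    using has_field_derivative_Re[OF has_vector_derivative_real_field[of "\<lambda>w. G (z + \<i> * w)" "G' * \<i>" 0 UNIV]] dH2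
    by simp
  then have "((\<lambda>t. u (z + \<i> * complex_of_real t)) has_field_derivative Re (G' * \<i>)) (at 0)"
    by (rule has_field_derivative_transform_within_open[OF _ oT2]) (use S eq in \<open>auto simp: T2_def\<close>)
  then show "dy u z = Re (\<i> * G')" unfolding dy_def by (simp add: DERIV_imp_deriv mult.commute)
qed

lemma diff_Re:
  fixes u :: "complex \<Rightarrow> real" and G :: "complex \<Rightarrow> complex"
  assumes S: "open S" "z \<in> S" and eq: "\<And>w. w \<in> S \<Longrightarrow> u w = Re (G w)"
    and d: "(G has_field_derivative G') (at z)"
  shows "u differentiable (at z)"
proof -
  have "(G has_derivative (\<lambda>h. G' * h)) (at z)" using d by (simp add: has_field_derivative_def)
  then have "((\<lambda>w. Re (G w)) has_derivative (\<lambda>h. Re (G' * h))) (at z)"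
    by (rule bounded_linear.has_derivative[OF bounded_linear_Re])
  then have "(u has_derivative (\<lambda>h. Re (G' * h))) (at z)"
    by (rule has_derivative_transform_within_open[OF _ S]) (use eq in auto)
  then show ?thesis unfolding differentiable_def by blast
qed

lemma harmonic_from_holo:
  fixes F F1 F2 F3 :: "complex \<Rightarrow> complex" and u :: "complex \<Rightarrow> real"
  assumes S: "open S" and eq: "\<And>z. z \<in> S \<Longrightarrow> u z = Re (F z)"
    and d1: "\<And>z. z \<in> S \<Longrightarrow> (F has_field_derivative F1 z) (at z)"
    and d2: "\<And>z. z \<in> S \<Longrightarrow> (F1 has_field_derivative F2 z) (at z)"
    and d3: "\<And>z. z \<in> S \<Longrightarrow> (F2 has_field_derivative F3 z) (at z)"
  shows "harmonic_on S u"
proof -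
  have dxu: "dx u z = Re (F1 z)" if "z \<in> S" for z using dx_Re(1)[OF S that eq d1[OF that]] .
  have dyu: "dy u z = Re (\<i> * F1 z)" if "z \<in> S" for z using dx_Re(2)[OF S that eq d1[OF that]] .
  have di: "((\<lambda>w. \<i> * F1 w) has_field_derivative \<i> * F2 z) (at z)" if "z \<in> S" for z
    using d2[OF that] by (auto intro!: derivative_eq_intros)
  have dxx: "dx (dx u) z = Re (F2 z)" if "z \<in> S" for z using dx_Re(1)[OF S that dxu d2[OF that]] .
  have dyx: "dy (dx u) z = Re (\<i> * F2 z)" if "z \<in> S" for z using dx_Re(2)[OF S that dxu d2[OF that]] .
  have dxy: "dx (dy u) z = Re (\<i> * F2 z)" if "z \<in> S" for z using dx_Re(1)[OF S that dyu di[OF that]] .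
  have dyy: "dy (dy u) z = Re (\<i> * (\<i> * F2 z))" if "z \<in> S" for z using dx_Re(2)[OF S that dyu di[OF that]] .
  have cF2: "continuous_on S F2"
  proof (rule continuous_at_imp_continuous_on, intro ballI)
    fix z assume "z \<in> S"
    then show "isCont F2 z" using d3 DERIV_isCont by blast
  qed
  have cRe: "continuous_on S (\<lambda>z. Re (F2 z))" by (intro continuous_intros cF2)
  have cRei: "continuous_on S (\<lambda>z. Re (\<i> * F2 z))" by (intro continuous_intros cF2)
  show ?thesis unfolding harmonic_on_def
  proof (intro conjI ballI)
    show "open S" by (rule S)
    fix z assume z: "z \<in> S"
    show "u differentiable (at z)" by (rule diff_Re[OF S z eq d1[OF z]])
    show "dx u differentiable (at z)" by (rule diff_Re[OF S z dxu d2[OF z]])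
    show "dy u differentiable (at z)" by (rule diff_Re[OF S z dyu di[OF z]])
    show "dx (dx u) z + dy (dy u) z = 0" using dxx[OF z] dyy[OF z] by simp
  next
    have "continuous_on S (dx (dx u)) \<longleftrightarrow> continuous_on S (\<lambda>z. Re (F2 z))" by (intro continuous_on_cong) (auto simp: dxx)
    then show "continuous_on S (dx (dx u))" using cRe by simp
    have "continuous_on S (dx (dy u)) \<longleftrightarrow> continuous_on S (\<lambda>z. Re (\<i> * F2 z))" by (intro continuous_on_cong) (auto simp: dxy)
    then show "continuous_on S (dx (dy u))" using cRei by simp
    have "continuous_on S (dy (dx u)) \<longleftrightarrow> continuous_on S (\<lambda>z. Re (\<i> * F2 z))" by (intro continuous_on_cong) (auto simp: dyx)
    then show "continuous_on S (dy (dx u))" using cRei by simp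
    have "continuous_on S (dy (dy u)) \<longleftrightarrow> continuous_on S (\<lambda>z. - Re (F2 z))" by (intro continuous_on_cong) (auto simp: dyy)
    moreover have "continuous_on S (\<lambda>z. - Re (F2 z))" using cRe by (rule continuous_on_minus)
    ultimately show "continuous_on S (dy (dy u))" by simp
  qed
qed



lemma pick_j:
  fixes p :: nat and r X :: real
  assumes p: "p \<ge> 1" and r: "0 \<le> r" "r < 1" and X: "X = 1 / (1 - r)"
  shows "\<exists>j \<le> p. real p \<le> 2 ^ Suc j * X \<and> r ^ p \<le> exp (1 - 2 ^ j)"
proof -
  define P where "P = (\<lambda>j. real p \<le> 2 ^ Suc j * X)"
  have X1: "X \<ge> 1" unfolding X using r by (simp add: field_simps)
  have Pp: "P p"
  proof -
    have "real p < 2 ^ p" by (metis less_exp of_nat_less_iff of_nat_numeral of_nat_power)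
    also have "\<dots> \<le> 2 ^ Suc p" by simp
    also have "\<dots> \<le> 2 ^ Suc p * X" using X1 by simp
    finally show ?thesis unfolding P_def by simp
  qed
  define j0 where "j0 = (LEAST j. P j)"
  have Pj0: "P j0" unfolding j0_def using Pp by (rule LeastI)
  have j0p: "j0 \<le> p" unfolding j0_def using Pp by (rule Least_le)
  have "r ^ p \<le> exp (1 - 2 ^ j0)"
  proof (cases j0)
    case 0
    have "r ^ p \<le> 1" using r by (simp add: power_le_one)
    then show ?thesis using 0 by simp
  next
    case (Suc i)
    have "\<not> P i" using Suc unfolding j0_def by (metis Suc lessI not_less_Least j0_def)
    then have big: "real p > 2 ^ j0 * X" unfolding P_def Suc by simp
    have "r ^ p \<le> exp (r - 1) ^ p"
      using r by (intro power_mono) (auto simp: exp_ge_add_one_self[of "r - 1", simplified])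
    also have "\<dots> = exp (real p * (r - 1))" by (simp add: exp_of_nat_mult)
    also have "\<dots> \<le> exp (1 - 2 ^ j0)"
    proof -
      have "2 ^ j0 * X * (1 - r) = 2 ^ j0" unfolding X using r by simp
      moreover have "real p * (1 - r) \<ge> 2 ^ j0 * X * (1 - r)"
        using big r by (intro mult_right_mono) auto
      ultimately have "real p * (1 - r) \<ge> 2 ^ j0" by linarith
      moreover have "real p * (r - 1) = - (real p * (1 - r))" by (simp add: algebra_simps)
      ultimately have "real p * (r - 1) \<le> - (2 ^ j0)" by linarith
      then show ?thesis by simp
    qed
    finally show ?thesis .
  qed
  then show ?thesis using Pj0 j0p unfolding P_def by blast
qed

lemma gfun_pow: assumes "doubling v D" "X \<ge> 1"
  shows "gfun v (2 ^ j * X) \<le> D ^ j * gfun v X"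
proof (induction j)
  case 0 then show ?case by simp
next
  case (Suc j)
  have D1: "D \<ge> 1" using assms unfolding doubling_def by simp
  have "gfun v (2 ^ Suc j * X) = gfun v (2 * (2 ^ j * X))" by (simp add: algebra_simps)
  also have "\<dots> \<le> D * gfun v (2 ^ j * X)"
  proof (rule gfun_double[OF assms(1)])
    have "1 \<le> (2::real) ^ j" by simp
    then have "1 * 1 \<le> (2::real) ^ j * X" using assms(2) by (intro mult_mono) auto
    then show "1 \<le> 2 ^ j * X" by simp
  qed
  also have "\<dots> \<le> D * (D ^ j * gfun v X)" using Suc D1 by (intro mult_left_mono) auto
  finally show ?case by simp
qed

definition C0 :: "real \<Rightarrow> real" where "C0 D = (\<Sum>j. exp (1 - 2 ^ j) * D ^ Suc j)"

lemma C0_summable: fixes D :: real assumes "D \<ge> 1" shows "summable (\<lambda>j. exp (1 - 2 ^ j) * D ^ Suc j)"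
proof (rule summable_ratio_test[of "1/2::real" "nat \<lceil>ln (2 * D)\<rceil>"])
  fix j assume j: "j \<ge> nat \<lceil>ln (2 * D)\<rceil>"
  have "ln (2 * D) \<le> real j" using j by linarith
  also have "\<dots> \<le> 2 ^ j" by (metis less_exp of_nat_less_iff of_nat_numeral of_nat_power less_imp_le)
  finally have "2 * D \<le> exp (2 ^ j)" using assms by (metis exp_le_cancel_iff exp_ln mult_pos_pos zero_less_numeral less_le_trans zero_less_one)
  then have h: "D * exp (- (2 ^ j)) \<le> 1/2" by (simp add: exp_minus field_simps)
  have "exp (1 - 2 ^ Suc j) * D ^ Suc (Suc j) = (exp (1 - 2 ^ j) * D ^ Suc j) * (D * exp (- (2 ^ j)))"
    by (simp add: exp_add[symmetric] algebra_simps)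
  also have "\<dots> \<le> (exp (1 - 2 ^ j) * D ^ Suc j) * (1/2)"
    using h assms by (intro mult_left_mono) auto
  finally show "norm (exp (1 - 2 ^ Suc j) * D ^ Suc (Suc j)) \<le> 1/2 * norm (exp (1 - 2 ^ j) * D ^ Suc j)"
    using assms by (simp add: abs_mult)
qed simp



context lac begin

lemma block_bound:
  fixes a :: "nat \<Rightarrow> complex" and r :: real
  assumes wv: "weight v" and dv: "doubling v D" and g0: "\<gamma> > 0"
    and cond: "\<forall>N::nat. N \<ge> 1 \<longrightarrow> (\<Sum>k\<in>{k. n k \<le> N}. norm (a k)) \<le> \<gamma> * gfun v (real N)"
    and r: "0 \<le> r" "r < 1"
  shows "(\<Sum>k<L. norm (a k) * r ^ n k) \<le> \<gamma> * C0 D * v r"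
proof -
  define X where "X = 1 / (1 - r)"
  have X1: "X \<ge> 1" unfolding X_def using r by (simp add: field_simps)
  have D1: "D \<ge> 1" using dv unfolding doubling_def by simp
  define M where "M = (\<lambda>j::nat. nat \<lfloor>2 ^ Suc j * X\<rfloor>)"
  define cj where "cj = (\<lambda>j::nat. exp (1 - 2 ^ j) :: real)"
  define J0 where "J0 = n L"
  define t where "t = (\<lambda>j k. cj j * (if n k \<le> M j then norm (a k) else 0))"
  have t0: "t j k \<ge> 0" for j k unfolding t_def cj_def by simp
  have step1: "norm (a k) * r ^ n k \<le> (\<Sum>j<J0. t j k)" if k: "k < L" for k
  proof -
    have "n k \<ge> 1" using npos[of k] by simp
    from pick_j[OF this r X_def] obtain j where j: "j \<le> n k" "real (n k) \<le> 2 ^ Suc j * X"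
      "r ^ n k \<le> exp (1 - 2 ^ j)" by blast
    have "n k < n L" using smono k by (simp add: strict_mono_less)
    then have jJ: "j < J0" unfolding J0_def using j(1) by simp
    have "n k \<le> M j" unfolding M_def using j(2) by (rule le_nat_floor)
    then have "t j k = cj j * norm (a k)" unfolding t_def by simp
    then have "norm (a k) * r ^ n k \<le> t j k"
      using j(3) unfolding cj_def by (simp add: mult.commute mult_left_mono)
    also have "\<dots> \<le> (\<Sum>j<J0. t j k)" using jJ t0 by (intro member_le_sum) auto
    finally show ?thesis .
  qed
  have step3: "(\<Sum>k<L. (if n k \<le> M j then norm (a k) else 0)) \<le> \<gamma> * (D ^ Suc j * v r)" for j
  proof -
    have "(\<Sum>k<L. (if n k \<le> M j then norm (a k) else 0)) = (\<Sum>k\<in>{k\<in>{..<L}. n k \<le> M j}. norm (a k))"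
      by (rule sum.inter_filter[symmetric]) simp
    also have "\<dots> \<le> (\<Sum>k\<in>{k. n k \<le> M j}. norm (a k))"
    proof (rule sum_mono2)
      have "{k. n k \<le> M j} \<subseteq> {..<M j}"
      proof
        fix k assume "k \<in> {k. n k \<le> M j}"
        then show "k \<in> {..<M j}" using n_ge[of k] by simp
      qed
      then show "finite {k. n k \<le> M j}" using finite_subset by blast
    qed auto
    also have "\<dots> \<le> \<gamma> * gfun v (real (M j))"
    proof -
      have "2 ^ Suc j * X \<ge> 2"
      proof -
        have "(2::real) * 1 \<le> 2 * 2 ^ j" by simp
        then have "(2::real) * 1 \<le> 2 ^ Suc j" by simp
        then have "(2::real) * 1 \<le> 2 ^ Suc j * X" using X1 by (intro mult_mono) auto
        then show ?thesis by simp
      qed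
      then have "M j \<ge> 1" unfolding M_def by linarith
      then show ?thesis using cond by blast
    qed
    also have "\<dots> \<le> \<gamma> * (D ^ Suc j * v r)"
    proof -
      have "2 ^ Suc j * X \<ge> 2"
      proof -
        have "(2::real) * 1 \<le> 2 * 2 ^ j" by simp
        then have "(2::real) * 1 \<le> 2 ^ Suc j" by simp
        then have "(2::real) * 1 \<le> 2 ^ Suc j * X" using X1 by (intro mult_mono) auto
        then show ?thesis by simp
      qed
      then have "M j \<ge> 1" unfolding M_def by linarith
      have "real (M j) \<le> 2 ^ Suc j * X" unfolding M_def using \<open>2 ^ Suc j * X \<ge> 2\<close> by linarith
      then have "gfun v (real (M j)) \<le> gfun v (2 ^ Suc j * X)"
        using \<open>M j \<ge> 1\<close> by (intro gfun_mono[OF wv]) auto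
      also have "\<dots> \<le> D ^ Suc j * gfun v X" by (rule gfun_pow[OF dv X1])
      also have "gfun v X = v r" unfolding gfun_def X_def using r by simp
      finally show ?thesis using g0 by (intro mult_left_mono) auto
    qed
    finally show ?thesis .
  qed
  have "(\<Sum>k<L. norm (a k) * r ^ n k) \<le> (\<Sum>k<L. \<Sum>j<J0. t j k)" using step1 by (intro sum_mono) auto
  also have "\<dots> = (\<Sum>j<J0. \<Sum>k<L. t j k)" by (rule sum.swap)
  also have "\<dots> = (\<Sum>j<J0. cj j * (\<Sum>k<L. (if n k \<le> M j then norm (a k) else 0)))"
    unfolding t_def by (simp add: sum_distrib_left)
  also have "\<dots> \<le> (\<Sum>j<J0. cj j * (\<gamma> * (D ^ Suc j * v r)))"
    using step3 by (intro sum_mono mult_left_mono) (auto simp: cj_def)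
  also have "\<dots> = \<gamma> * v r * (\<Sum>j<J0. exp (1 - 2 ^ j) * D ^ Suc j)"
    unfolding cj_def by (simp add: sum_distrib_left algebra_simps)
  also have "\<dots> \<le> \<gamma> * v r * C0 D"
  proof -
    have "(\<Sum>j<J0. exp (1 - 2 ^ j) * D ^ Suc j) \<le> C0 D"
      unfolding C0_def using D1 by (intro sum_le_suminf C0_summable) auto
    moreover have "v r \<ge> 1" using weight_ge1[OF wv r] .
    ultimately show ?thesis using g0 by (intro mult_left_mono) auto
  qed
  finally show ?thesis by (simp add: algebra_simps)
qed

end



context lac begin

lemma bwd:
  fixes a :: "nat \<Rightarrow> complex" and u :: "complex \<Rightarrow> real"
  assumes wv: "weight v" and dv: "doubling v D"
    and summ: "\<And>z. norm z < 1 \<Longrightarrow> summable (\<lambda>k. a k * z ^ n k)"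
    and udef: "\<And>z. u z = Re (\<Sum>k. a k * z ^ n k)"
    and ex: "\<exists>\<gamma>>0. \<forall>N::nat. N \<ge> 1 \<longrightarrow> (\<Sum>k\<in>{k. n k \<le> N}. norm (a k)) \<le> \<gamma> * gfun v (real N)"
  shows "u \<in> kv_inf v"
proof -
  obtain \<gamma> where g0: "\<gamma> > 0" and cond: "\<forall>N::nat. N \<ge> 1 \<longrightarrow> (\<Sum>k\<in>{k. n k \<le> N}. norm (a k)) \<le> \<gamma> * gfun v (real N)"
    using ex by blast
  define c where "c = cc n a"
  have s0: "summable (\<lambda>m. c m * z ^ m)" if "norm z < 1" for z
    unfolding c_def using summ[OF that] by (simp add: summable_cc_iff)
  have s1: "summable (\<lambda>m. diffs c m * z ^ m)" if "norm z < 1" for z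
    by (rule termdiff_converges[OF that s0])
  have s2: "summable (\<lambda>m. diffs (diffs c) m * z ^ m)" if "norm z < 1" for z
    by (rule termdiff_converges[OF that s1])
  have s3: "summable (\<lambda>m. diffs (diffs (diffs c)) m * z ^ m)" if "norm z < 1" for z
    by (rule termdiff_converges[OF that s2])
  have eqF: "u z = Re (\<Sum>m. c m * z ^ m)" for z
  proof -
    have "(\<Sum>k. c (n k) * z ^ n k) = (\<Sum>m. c m * z ^ m)"
      by (rule suminf_mono_reindex[OF smono]) (simp add: c_def cc_def)
    then show ?thesis unfolding udef c_def by (simp only: cc_n)
  qed
  define F where "F = (\<lambda>z. \<Sum>m. c m * z ^ m)"
  define F1 where "F1 = (\<lambda>z. \<Sum>m. diffs c m * z ^ m)"
  define F2 where "F2 = (\<lambda>z. \<Sum>m. diffs (diffs c) m * z ^ m)"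
  define F3 where "F3 = (\<lambda>z. \<Sum>m. diffs (diffs (diffs c)) m * z ^ m)"
  have e: "\<And>z. z \<in> ball 0 1 \<Longrightarrow> u z = Re (F z)" unfolding F_def by (rule eqF)
  have d1: "\<And>z. z \<in> ball 0 1 \<Longrightarrow> (F has_field_derivative F1 z) (at z)"
    unfolding F_def F1_def by (rule termdiffs_strong'[OF s0]) simp_all
  have d2: "\<And>z. z \<in> ball 0 1 \<Longrightarrow> (F1 has_field_derivative F2 z) (at z)"
    unfolding F1_def F2_def by (rule termdiffs_strong'[OF s1]) simp_all
  have d3: "\<And>z. z \<in> ball 0 1 \<Longrightarrow> (F2 has_field_derivative F3 z) (at z)"
    unfolding F2_def F3_def by (rule termdiffs_strong'[OF s2]) simp_all
  have har: "harmonic_on (ball 0 1) u"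
    by (rule harmonic_from_holo[OF open_ball e d1 d2 d3])
  have D1: "D \<ge> 1" using dv unfolding doubling_def by simp
  define K where "K = \<gamma> * C0 D"
  have C0pos: "C0 D > 0"
  proof -
    have "(\<Sum>j\<in>{0}. exp (1 - 2 ^ j) * D ^ Suc j) \<le> C0 D"
      unfolding C0_def using D1 by (intro sum_le_suminf C0_summable) auto
    then show ?thesis using D1 by simp
  qed
  have K0: "K > 0" unfolding K_def using g0 C0pos by simp
  have bound: "u z \<le> K * v (norm z)" if z: "z \<in> ball 0 1" for z
  proof -
    have nz: "norm z < 1" using z by simp
    define S where "S = (\<Sum>k. a k * z ^ n k)"
    have "(\<lambda>L. \<Sum>k<L. a k * z ^ n k) \<longlonglongrightarrow> S" unfolding S_def using summ[OF nz] by (rule summable_LIMSEQ)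
    then have lim: "(\<lambda>L. norm (\<Sum>k<L. a k * z ^ n k)) \<longlonglongrightarrow> norm S" by (rule tendsto_norm)
    have "norm S \<le> K * v (norm z)"
    proof (rule LIMSEQ_le_const2[OF lim], intro exI allI impI)
      fix L :: nat
      have "norm (\<Sum>k<L. a k * z ^ n k) \<le> (\<Sum>k<L. norm (a k * z ^ n k))" by (rule norm_sum)
      also have "\<dots> = (\<Sum>k<L. norm (a k) * norm z ^ n k)" by (simp add: norm_mult norm_power)
      also have "\<dots> \<le> \<gamma> * C0 D * v (norm z)"
        by (rule block_bound[OF wv dv g0 cond]) (use nz in auto)
      finally show "norm (\<Sum>k<L. a k * z ^ n k) \<le> K * v (norm z)" unfolding K_def .
    qed
    moreover have "u z \<le> norm S" unfolding udef S_def by (rule complex_Re_le_cmod)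
    ultimately show ?thesis by linarith
  qed
  show ?thesis unfolding kv_inf_def using har K0 bound by blast
qed

end

theorem theorem2:
  fixes v :: "real \<Rightarrow> real" and D lam :: real
    and n :: "nat \<Rightarrow> nat" and a :: "nat \<Rightarrow> complex" and u :: "complex \<Rightarrow> real"
  assumes "weight v"
    and "doubling v D"
    and "lam > 1"
    and "\<And>k. n k > 0"
    and "\<And>k. real (n (Suc k)) \<ge> lam * real (n k)"
    and "\<And>z. norm z < 1 \<Longrightarrow> summable (\<lambda>k. a k * z ^ n k)"
    and "\<And>z. u z = Re (\<Sum>k. a k * z ^ n k)"
  shows "u \<in> kv_inf v \<longleftrightarrow>
    (\<exists>\<gamma>>0. \<forall>N::nat. N \<ge> 1 \<longrightarrow> (\<Sum>k\<in>{k. n k \<le> N}. norm (a k)) \<le> \<gamma> * gfun v (real N))"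
proof -
  interpret lac lam n using assms(3-5) by unfold_locales auto
  show ?thesis
  proof
    assume "u \<in> kv_inf v"
    then show "\<exists>\<gamma>>0. \<forall>N::nat. N \<ge> 1 \<longrightarrow> (\<Sum>k\<in>{k. n k \<le> N}. norm (a k)) \<le> \<gamma> * gfun v (real N)"
      using fwd[OF assms(1,2,6,7)] by blast
  next
    assume "\<exists>\<gamma>>0. \<forall>N::nat. N \<ge> 1 \<longrightarrow> (\<Sum>k\<in>{k. n k \<le> N}. norm (a k)) \<le> \<gamma> * gfun v (real N)"
    then show "u \<in> kv_inf v" using bwd[OF assms(1,2,6,7)] by blast
  qed
qed

end
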